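(* The class $\mathcal{S}_d$ is not closed under asymptotic equivalence: there exist density functions $p_1,p_2$ on $\mathbb{R}$ and a constant $c>0$ such that $p_1\in\mathcal{S}_d$, $p_2\notin\mathcal{S}_d$, and $p_2(x)\sim c\,p_1(x)$.
   Context: For positive functions $f,g$ defined on some $[a,\infty)$, $f(x)\sim g(x)$ means $\lim_{x\to\infty}f(x)/g(x)=1$. A density function is a measurable $g:\mathbb{R}\to[0,\infty)$ with $\int_{-\infty}^{\infty} g=1$. For integrable $f,g$, $f\otimes g(x):=\int_{-\infty}^{\infty} f(x-u)g(u)\,du$. The class $\mathbf{L}$ consists of nonnegative measurable $g$ on $\mathbb{R}$ with $g(x)>0$ for all sufficiently large $x$ and $g(x+a)\sim g(x)$ for every $a\in\mathbb{R}$. $\mathcal{L}_d$ is the set of density functions in $\mathbf{L}$; $\mathcal{S}_d$ is the set of $g\in\mathcal{L}_d$ with $g\otimes g(x)\sim 2g(x)$. A class $\mathcal{C}$ of density functions is closed under asymptotic equivalence if $p_1\in\mathcal{C}$, $p_2$ a density function, and $p_2(x)\sim c\,p_1(x)$ for some $c>0$ imply $p_2\in\mathcal{C}$. *)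

theory Defs
  imports "HOL-Analysis.Analysis"
begin

definition asymp_eq :: "(real \<Rightarrow> real) \<Rightarrow> (real \<Rightarrow> real) \<Rightarrow> bool" where
  "asymp_eq f g \<longleftrightarrow> ((\<lambda>x. f x / g x) \<longlongrightarrow> 1) at_top"

definition density_fun :: "(real \<Rightarrow> real) \<Rightarrow> bool" where
  "density_fun g \<longleftrightarrow> g \<in> borel_measurable lborel \<and> (\<forall>x. 0 \<le> g x)
     \<and> integrable lborel g \<and> integral\<^sup>L lborel g = 1"

definition conv :: "(real \<Rightarrow> real) \<Rightarrow> (real \<Rightarrow> real) \<Rightarrow> real \<Rightarrow> real" where
  "conv f g x = (\<integral>u. f (x - u) * g u \<partial>lborel)"

definition class_L :: "(real \<Rightarrow> real) set" where
  "class_L = {g. g \<in> borel_measurable lborel \<and> (\<forall>x. 0 \<le> g x)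
     \<and> (\<forall>\<^sub>F x in at_top. g x > 0)
     \<and> (\<forall>a::real. asymp_eq (\<lambda>x. g (x + a)) g)}"

definition L_d :: "(real \<Rightarrow> real) set" where
  "L_d = {g. density_fun g \<and> g \<in> class_L}"

definition S_d :: "(real \<Rightarrow> real) set" where
  "S_d = {g. g \<in> L_d \<and> asymp_eq (conv g g) (\<lambda>x. 2 * g x)}"

end

theory Submission
  imports Defs "HOL-Real_Asymp.Real_Asymp"
begin

definition e0 :: "real \<Rightarrow> real" where "e0 t = indicator {1..} t * t powr -2"

lemma e0_meas[measurable]: "e0 \<in> borel_measurable borel"
  unfolding e0_def by measurable

lemma e0_int: "integrable lborel e0" and e0_integral: "integral\<^sup>L lborel e0 = 1"
proof -
  have h: "((\<lambda>x::real. x powr -2) has_integral 1) {1..}"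
    using has_integral_powr_to_inf[of "-2" 1] by simp
  have ai: "(\<lambda>x::real. x powr -2) absolutely_integrable_on {1..}"
    by (rule nonnegative_absolutely_integrable_1) (use h in \<open>auto simp: integrable_on_def\<close>)
  then have "integrable lebesgue (\<lambda>x. indicator {1..} x *\<^sub>R (x::real) powr -2)"
    by (simp add: set_integrable_def)
  then show "integrable lborel e0"
    unfolding e0_def[abs_def] by (subst (asm) integrable_completion) auto
  have "(LINT x:{1..} | lebesgue. (x::real) powr -2) = 1"
    using set_lebesgue_integral_eq_integral(2)[OF ai] h by (simp add: integral_unique)
  then show "integral\<^sup>L lborel e0 = 1"
    unfolding e0_def[abs_def] by (subst (asm) set_lebesgue_integral_def, subst (asm) integral_completion) auto
qed

lemma e0_nonneg: "0 \<le> e0 t" by (simp add: e0_def)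

lemma e0_shift: "t \<ge> 0 \<Longrightarrow> e0 (1 + t) = exp (-2 * ln (1+t))"
  by (simp add: e0_def powr_def)

lemma abs_cos_diff: "\<bar>cos (a::real) - cos b\<bar> \<le> \<bar>a - b\<bar>"
proof -
  have "\<bar>cos a - cos b\<bar> = 2 * \<bar>sin ((a + b) / 2)\<bar> * \<bar>sin ((b - a) / 2)\<bar>"
    by (simp add: cos_diff_cos abs_mult)
  also have "\<dots> \<le> 2 * 1 * \<bar>(b - a) / 2\<bar>"
    by (intro mult_mono abs_sin_x_le_abs_x) auto
  finally show ?thesis by simp
qed

definition w :: "real \<Rightarrow> real" where "w t = (1 - cos (sqrt t)) / 2"
definition h :: "real \<Rightarrow> real" where "h t = w t * ln (1 + t)"
definition f :: "real \<Rightarrow> real" where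
  "f t = (if t < 0 then 0 else exp (h t - 7 * ln (1 + t)))"

lemma w_ge0: "0 \<le> w t" and w_le1: "w t \<le> 1"
  unfolding w_def using cos_le_one[of "sqrt t"] cos_ge_minus_one[of "sqrt t"] by auto

lemma w_lip: "w a - w b \<le> \<bar>sqrt a - sqrt b\<bar> / 2"
  unfolding w_def using abs_cos_diff[of "sqrt b" "sqrt a"] by (simp add: abs_minus_commute abs_le_iff field_simps)

lemma h_ge0: "t \<ge> 0 \<Longrightarrow> 0 \<le> h t"
  unfolding h_def using w_ge0 by simp

lemma h_le: "t \<ge> 0 \<Longrightarrow> h t \<le> ln (1 + t)"
  unfolding h_def using w_le1[of t] w_ge0[of t]
  by (intro mult_left_le_one_le) auto

lemma f_meas[measurable]: "f \<in> borel_measurable borel"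
  unfolding f_def h_def w_def by measurable

lemma f_pos: "t \<ge> 0 \<Longrightarrow> f t > 0"
  by (simp add: f_def)

lemma f_nonneg: "0 \<le> f t"
  by (simp add: f_def)

lemma f_le_e0: "f t \<le> e0 (1 + t)"
proof (cases "t < 0")
  case True then show ?thesis by (simp add: f_def e0_nonneg)
next
  case False
  then have "h t - 7 * ln (1 + t) \<le> -2 * ln (1 + t)"
  proof -
    have "0 \<le> ln (1+t)" using False by simp
    then show ?thesis using h_le[of t] False by linarith
  qed
  then have "exp (h t - 7 * ln (1 + t)) \<le> exp (-2 * ln (1 + t))" by simp
  then show ?thesis using False by (simp add: f_def e0_shift)
qed

lemma e0_shift_int: "integrable lborel (\<lambda>t. e0 (1 + t))"
  using lborel_integrable_real_affine[OF e0_int, of 1 1] by simp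

lemma f_int: "integrable lborel f"
  by (rule Bochner_Integration.integrable_bound[OF e0_shift_int]) (auto simp: f_nonneg e0_nonneg f_le_e0)

definition Z :: real where "Z = integral\<^sup>L lborel f"

lemma Z_pos: "Z > 0"
proof -
  have "(\<integral>t. indicator {0..1} (t::real) / 128 \<partial>lborel) \<le> Z"
    unfolding Z_def
  proof (rule Bochner_Integration.integral_mono)
    show "integrable lborel f" by (rule f_int)
    show "integrable lborel (\<lambda>t. indicator {0..1::real} t / (128::real))"
      by (intro integrable_divide integrable_real_indicator) auto
    fix t :: real
    show "indicator {0..1} t / (128::real) \<le> f t"
    proof (cases "t \<in> {0..1}")
      case True
      then have l2: "ln (1 + t) \<le> ln 2" by simp
      have "0 \<le> h t" using h_ge0[of t] True by auto
      then have "- 7 * ln 2 \<le> h t - 7 * ln (1 + t)" using l2 by linarith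
      then have "exp (- 7 * ln 2) \<le> f t" using True by (simp add: f_def)
      moreover have "exp (- 7 * ln 2) = (1/128::real)"
      proof -
        have "exp (7 * ln 2) = (2::real) powr 7" by (simp add: powr_def)
        also have "\<dots> = 128" by (simp add: powr_numeral)
        finally show ?thesis by (simp add: exp_minus)
      qed
      ultimately show ?thesis using True by simp
    qed (simp add: f_nonneg)
  qed
  then show ?thesis by simp
qed

lemma sqrt_diff_bound:
  assumes "x > 0" "x + a \<ge> 0"
  shows "\<bar>sqrt (x + a) - sqrt x\<bar> \<le> \<bar>a\<bar> / sqrt x"
proof -
  have sp: "sqrt x > 0" using assms by simp
  have s2: "sqrt (x + a) \<ge> 0" using assms by simp
  have q1: "sqrt (x + a) * sqrt (x + a) = x + a" using assms by simp
  have q2: "sqrt x * sqrt x = x" using assms by simp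
  have eq: "(sqrt (x + a) - sqrt x) * (sqrt (x + a) + sqrt x) = a"
    using q1 q2 by (simp add: algebra_simps)
  have "\<bar>sqrt (x + a) - sqrt x\<bar> * sqrt x \<le> \<bar>sqrt (x + a) - sqrt x\<bar> * (sqrt (x + a) + sqrt x)"
    using s2 by (intro mult_left_mono) auto
  also have "\<dots> = \<bar>a\<bar>" using eq sp s2 by (metis abs_mult abs_of_nonneg add_nonneg_nonneg less_imp_le)
  finally show ?thesis using sp by (simp add: field_simps)
qed

lemma h_shift_bound:
  assumes "x > 0" "x + a \<ge> 0"
  shows "\<bar>h (x + a) - h x\<bar> \<le> \<bar>a\<bar> / sqrt x / 2 * ln (1 + x + \<bar>a\<bar>) + \<bar>ln (1 + (x + a)) - ln (1 + x)\<bar>"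
proof -
  have eq: "h (x + a) - h x = (w (x + a) - w x) * ln (1 + (x + a)) + w x * (ln (1 + (x + a)) - ln (1 + x))"
    unfolding h_def by (simp add: algebra_simps)
  have wd: "\<bar>w (x + a) - w x\<bar> \<le> \<bar>a\<bar> / sqrt x / 2"
    using w_lip[of "x+a" x] w_lip[of x "x+a"] sqrt_diff_bound[OF assms]
    by (auto simp: abs_le_iff abs_minus_commute)
  have l0: "0 \<le> ln (1 + (x + a))" using assms by simp
  have l1: "ln (1 + (x + a)) \<le> ln (1 + x + \<bar>a\<bar>)" using assms by simp
  have "\<bar>(w (x + a) - w x) * ln (1 + (x + a))\<bar> \<le> \<bar>a\<bar> / sqrt x / 2 * ln (1 + x + \<bar>a\<bar>)"
    unfolding abs_mult using wd l0 l1 by (intro mult_mono) auto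
  moreover have "\<bar>w x * (ln (1 + (x + a)) - ln (1 + x))\<bar> \<le> \<bar>ln (1 + (x + a)) - ln (1 + x)\<bar>"
    unfolding abs_mult using w_ge0[of x] w_le1[of x] by (intro mult_left_le_one_le) auto
  ultimately show ?thesis unfolding eq by linarith
qed

lemma f_L: "((\<lambda>x. f (x + a) / f x) \<longlongrightarrow> 1) at_top"
proof -
  define E where "E x = (h (x + a) - h x) - 7 * (ln (1 + (x + a)) - ln (1 + x))" for x
  have ev: "\<forall>\<^sub>F x in at_top. x > 0 \<and> x + a \<ge> 0"
    using eventually_ge_at_top[of "max 1 (1 - a)"] by eventually_elim auto
  have "(E \<longlongrightarrow> 0) at_top"
  proof -
    have A: "((\<lambda>x. h (x + a) - h x) \<longlongrightarrow> 0) at_top"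
    proof (rule Lim_null_comparison)
      show "\<forall>\<^sub>F x in at_top. norm (h (x + a) - h x) \<le> \<bar>a\<bar> / sqrt x / 2 * ln (1 + x + \<bar>a\<bar>) + \<bar>ln (1 + (x + a)) - ln (1 + x)\<bar>"
        using ev by eventually_elim (use h_shift_bound in auto)
      have 1: "((\<lambda>x. \<bar>a\<bar> / sqrt x / 2 * ln (1 + x + \<bar>a\<bar>)) \<longlongrightarrow> 0) at_top"
        by real_asymp
      have 2: "((\<lambda>x. \<bar>ln (1 + (x + a)) - ln (1 + x)\<bar>) \<longlongrightarrow> 0) at_top"
        by (rule tendsto_rabs_zero) real_asymp
      show "((\<lambda>x. \<bar>a\<bar> / sqrt x / 2 * ln (1 + x + \<bar>a\<bar>) + \<bar>ln (1 + (x + a)) - ln (1 + x)\<bar>) \<longlongrightarrow> 0) at_top"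
        using tendsto_add[OF 1 2] by simp
    qed
    have B: "((\<lambda>x. ln (1 + (x + a)) - ln (1 + x)) \<longlongrightarrow> 0) at_top"
      by real_asymp
    have "((\<lambda>x. (h (x + a) - h x) - 7 * (ln (1 + (x + a)) - ln (1 + x))) \<longlongrightarrow> 0 - 7 * 0) at_top"
      by (intro tendsto_intros A B)
    then show ?thesis unfolding E_def by simp
  qed
  then have "((\<lambda>x. exp (E x)) \<longlongrightarrow> exp 0) at_top"
    by (intro tendsto_intros)
  moreover have "\<forall>\<^sub>F x in at_top. exp (E x) = f (x + a) / f x"
    using ev
  proof eventually_elim
    case (elim x)
    then show ?case
      by (simp add: f_def E_def exp_diff exp_add algebra_simps)
  qed
  ultimately show ?thesis by (simp add: tendsto_cong)
qed

lemma h_drop: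
  assumes m: "0 \<le> m" and M: "0 \<le> M"
  shows "h M - h (M + m) \<le> 3 + 4 * ln (1 + m)"
proof -
  have lm: "0 \<le> ln (1 + m)" using m by simp
  have lM: "0 \<le> ln (1 + M)" using M by simp
  have d1: "h M - h (M + m) \<le> (w M - w (M + m)) * ln (1 + M)"
  proof -
    have "w (M + m) * ln (1 + M) \<le> w (M + m) * ln (1 + (M + m))"
      using m M w_ge0 by (intro mult_left_mono) auto
    then show ?thesis unfolding h_def by (simp add: algebra_simps)
  qed
  have d2: "h M - h (M + m) \<le> ln (1 + M)"
    using h_le[OF M] h_ge0[of "M+m"] m M by linarith
  show ?thesis
  proof (cases "1 + M \<le> (1 + m) ^ 4")
    case True
    then have "ln (1 + M) \<le> ln ((1 + m) ^ 4)" using M m by (subst ln_le_cancel_iff) auto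
    also have "\<dots> = 4 * ln (1 + m)" using m by (simp add: ln_realpow)
    finally show ?thesis using d2 by linarith
  next
    case F: False
    show ?thesis
    proof (cases "M \<le> 1")
      case True
      then have "ln (1 + M) \<le> ln 2" using M by simp
      then show ?thesis using d2 lm ln_2_less_1 by linarith
    next
      case False
      define y where "y = 1 + M"
      define s where "s = sqrt (sqrt y)"
      have y1: "y \<ge> 1" using M y_def by simp
      have s0: "s > 0" using y1 s_def by simp
      have s2: "s ^ 2 = sqrt y" using y1 unfolding s_def by simp
      have "s ^ 4 = (s ^ 2) ^ 2" by (simp flip: power_mult)
      also have "\<dots> = y" using s2 y1 by simp
      finally have s4: "s ^ 4 = y" .
      have "(1 + m) ^ 4 < s ^ 4" using F s4 y_def by simp
      then have ms: "1 + m < s" using power_less_imp_less_base[of "1+m" 4 s] s0 by auto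
      have "ln (s ^ 4) = 4 * ln s" using s0 by (simp add: ln_realpow)
      then have "ln y = 4 * ln s" using s4 by simp
      also have "\<dots> \<le> 4 * (s - 1)" using ln_le_minus_one[OF s0] by simp
      finally have lny: "ln y \<le> 4 * s" by simp
      have "m * ln y \<le> s * (4 * s)"
      proof (rule mult_mono)
        show "m \<le> s" using ms by simp
        show "ln y \<le> 4 * s" by (rule lny)
        show "0 \<le> s" using s0 by simp
        show "0 \<le> ln y" using y1 by simp
      qed
      then have mly: "m * ln y \<le> 4 * sqrt y" using s2 by (simp add: power2_eq_square)
      have Mpos: "M > 0" using False by simp
      have wd: "w M - w (M + m) \<le> m / sqrt M / 2"
        using w_lip[of M "M+m"] sqrt_diff_bound[of M m] Mpos m
        by (auto simp: abs_minus_commute)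
      have "(w M - w (M + m)) * ln (1 + M) \<le> (m / sqrt M / 2) * ln (1 + M)"
        using wd lM by (intro mult_right_mono) auto
      also have "\<dots> = (m * ln y) / (2 * sqrt M)" using y_def by simp
      also have "\<dots> \<le> (4 * sqrt y) / (2 * sqrt M)"
        using mly Mpos by (intro divide_right_mono) auto
      also have "\<dots> \<le> 3"
      proof -
        have "y \<le> 2 * M" using False y_def by simp
        then have "sqrt y \<le> sqrt 2 * sqrt M" by (metis real_sqrt_le_mono real_sqrt_mult)
        moreover have "sqrt 2 \<le> (1.5::real)"
          by (rule real_le_lsqrt) (auto simp: power2_eq_square)
        moreover have "sqrt 2 * sqrt M \<le> 1.5 * sqrt M"
          using \<open>sqrt 2 \<le> 1.5\<close> Mpos by (intro mult_right_mono) auto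
        ultimately have "sqrt y \<le> 1.5 * sqrt M" by linarith
        then show ?thesis using Mpos by (simp add: field_simps)
      qed
      finally show ?thesis using d1 lm by linarith
    qed
  qed
qed

definition K :: real where "K = exp (3 + 7 * ln 2)"

lemma K_pos: "K > 0" by (simp add: K_def)

lemma conv_bound:
  assumes u: "0 \<le> u" and ux: "2 * u \<le> x"
  shows "f u * f (x - u) / f x \<le> K * e0 (1 + u)"
proof -
  define M where "M = x - u"
  have M: "M \<ge> u" "M \<ge> 0" "x = M + u" using u ux M_def by auto
  have x0: "x \<ge> 0" using M u by simp
  have fu: "f u = exp (h u - 7 * ln (1 + u))" using u by (simp add: f_def)
  have fM: "f (x - u) = exp (h M - 7 * ln (1 + M))" using M(2) by (simp add: f_def M_def[symmetric])
  have fx: "f x = exp (h (M + u) - 7 * ln (1 + x))" using x0 by (simp add: f_def M(3))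
  have eq: "f u * f (x - u) / f x
      = exp ((h u - 7 * ln (1 + u)) + (h M - 7 * ln (1 + M)) - (h (M + u) - 7 * ln (1 + x)))"
    unfolding fu fM fx by (simp only: exp_add exp_diff)
  have a1: "h u \<le> ln (1 + u)" using h_le[OF u] .
  have a2: "h M - h (M + u) \<le> 3 + 4 * ln (1 + u)" using h_drop[OF u M(2)] .
  have "ln (1 + x) \<le> ln (2 * (1 + M))" using M u by simp
  also have "\<dots> = ln 2 + ln (1 + M)" using M(2) ln_mult[of 2 "1+M"] by simp
  finally have a3: "ln (1 + x) \<le> ln 2 + ln (1 + M)" .
  have "f u * f (x - u) / f x \<le> exp (3 + 7 * ln 2 + (-2 * ln (1 + u)))"
    unfolding eq exp_le_cancel_iff using a1 a2 a3 by linarith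
  also have "\<dots> = K * e0 (1 + u)" using u unfolding K_def e0_shift[OF u] by (simp only: exp_add)
  finally show ?thesis .
qed

definition G :: "real \<Rightarrow> real \<Rightarrow> real" where
  "G x u = f u * f (x - u) / f x / Z"

definition g :: "bool \<Rightarrow> real \<Rightarrow> real \<Rightarrow> real" where
  "g b x u = indicator (if b then {..x/2} else {..<x/2}) u * G x u"

lemma g_meas[measurable]: "g b x \<in> borel_measurable borel"
  unfolding g_def G_def by (cases b) auto

lemma g_bound:
  assumes "x \<ge> 0"
  shows "norm (g b x u) \<le> K / Z * e0 (1 + u)"
proof (cases "u < 0 \<or> u \<notin> (if b then {..x/2} else {..<x/2})")
  case True
  then have "g b x u = 0" unfolding g_def G_def f_def by auto
  moreover have "0 \<le> K / Z * e0 (1 + u)" using Z_pos e0_nonneg[of "1+u"] K_pos by simp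
  ultimately show ?thesis by simp
next
  case False
  then have u: "u \<ge> 0" "2 * u \<le> x" by (cases b; auto)+
  then have "g b x u = f u * f (x - u) / f x / Z" using False unfolding g_def G_def by auto
  moreover have "0 \<le> f u * f (x - u) / f x / Z"
    using f_nonneg Z_pos by simp
  moreover have "f u * f (x - u) / f x / Z \<le> K * e0 (1 + u) / Z"
    using divide_right_mono[OF conv_bound[OF u], of Z] Z_pos by simp
  ultimately show ?thesis by simp
qed

lemma g_lim: "((\<lambda>x. g b x u) \<longlongrightarrow> f u / Z) at_top"
proof (cases "u < 0")
  case True
  then show ?thesis unfolding g_def G_def f_def by simp
next
  case False
  have ev: "\<forall>\<^sub>F x in at_top. g b x u = f u / Z * (f (x + (- u)) / f x)"
    using eventually_ge_at_top[of "2 * u + 2"]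
  proof eventually_elim
    case (elim x)
    then have "u \<in> (if b then {..x/2} else {..<x/2})" by auto
    then show ?case unfolding g_def G_def by simp
  qed
  have "((\<lambda>x. f u / Z * (f (x + (- u)) / f x)) \<longlongrightarrow> f u / Z * 1) at_top"
    by (intro tendsto_intros f_L)
  then show ?thesis using ev by (simp add: tendsto_cong)
qed

lemma g_int: assumes "x \<ge> 0" shows "integrable lborel (g b x)"
proof (rule Bochner_Integration.integrable_bound[OF integrable_mult_right[OF e0_shift_int, of "K / Z"]])
  show "g b x \<in> borel_measurable lborel" by simp
  show "AE u in lborel. norm (g b x u) \<le> norm (K / Z * e0 (1 + u))"
  proof (intro AE_I2)
    fix u
    have "0 \<le> K / Z * e0 (1 + u)" using Z_pos e0_nonneg[of "1+u"] K_pos by simp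
    then show "norm (g b x u) \<le> norm (K / Z * e0 (1 + u))"
      using g_bound[OF assms, of b u] by (simp only: real_norm_def abs_of_nonneg)
  qed
qed

lemma g_conv: "((\<lambda>x. integral\<^sup>L lborel (g b x)) \<longlongrightarrow> 1) at_top"
proof -
  have "((\<lambda>x. integral\<^sup>L lborel (g b x)) \<longlongrightarrow> integral\<^sup>L lborel (\<lambda>u. f u / Z)) at_top"
  proof (rule integral_dominated_convergence_at_top[where w="\<lambda>u. K / Z * e0 (1 + u)"])
    show "(\<lambda>u. f u / Z) \<in> borel_measurable lborel" by simp
    show "g b t \<in> borel_measurable lborel" for t by simp
    show "integrable lborel (\<lambda>u. K / Z * e0 (1 + u))"
      by (rule integrable_mult_right[OF e0_shift_int])
    show "AE u in lborel. ((\<lambda>i. g b i u) \<longlongrightarrow> f u / Z) at_top"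
      by (simp add: g_lim)
    show "\<forall>\<^sub>F i in at_top. AE u in lborel. norm (g b i u) \<le> K / Z * e0 (1 + u)"
      using eventually_ge_at_top[of 0] by eventually_elim (intro AE_I2 g_bound)
  qed
  moreover have "integral\<^sup>L lborel (\<lambda>u. f u / Z) = 1"
    using Z_pos by (simp add: Z_def)
  ultimately show ?thesis by simp
qed

definition p :: "real \<Rightarrow> real" where "p t = f t / Z"

lemma p_meas[measurable]: "p \<in> borel_measurable borel"
  unfolding p_def by measurable

lemma G_split: "G x u = g True x u + g False x (x + (-1) * u)"
  unfolding g_def G_def by (cases "u \<le> x / 2") (auto simp: indicator_def field_simps)

lemma conv_p_ratio:
  assumes x: "x > 0"
  shows "conv p p x / (2 * p x) = (integral\<^sup>L lborel (g True x) + integral\<^sup>L lborel (g False x)) / 2"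
proof -
  have px: "p x > 0" using x f_pos Z_pos by (simp add: p_def)
  have "conv p p x / (2 * p x) = (\<integral>u. p (x - u) * p u / (2 * p x) \<partial>lborel)"
    unfolding conv_def by simp
  also have "\<dots> = (\<integral>u. G x u / 2 \<partial>lborel)"
    using Z_pos f_pos[of x] x by (intro Bochner_Integration.integral_cong) (auto simp: p_def G_def field_simps)
  also have "\<dots> = (\<integral>u. G x u \<partial>lborel) / 2" by simp
  also have "(\<integral>u. G x u \<partial>lborel) = integral\<^sup>L lborel (g True x) + (\<integral>u. g False x (x + (-1) * u) \<partial>lborel)"
    unfolding G_split using x
    by (intro Bochner_Integration.integral_add g_int lborel_integrable_real_affine) auto
  also have "(\<integral>u. g False x (x + (-1) * u) \<partial>lborel) = integral\<^sup>L lborel (g False x)"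
    using lborel_integral_real_affine[of "-1" "g False x" x] by simp
  finally show ?thesis .
qed

lemma p_density: "density_fun p"
  unfolding density_fun_def
proof (intro conjI allI)
  show "p \<in> borel_measurable lborel" by simp
  show "0 \<le> p x" for x using f_nonneg Z_pos by (simp add: p_def)
  show "integrable lborel p" unfolding p_def[abs_def] by (intro integrable_divide f_int)
  show "integral\<^sup>L lborel p = 1" unfolding p_def[abs_def] using Z_pos by (simp add: Z_def)
qed

lemma p_pos: "x \<ge> 0 \<Longrightarrow> p x > 0"
  using f_pos Z_pos by (simp add: p_def)

lemma p_S: "p \<in> S_d"
  unfolding S_d_def L_d_def class_L_def
proof (intro CollectI conjI allI p_density)
  show "p \<in> borel_measurable lborel" by simp
  show "0 \<le> p x" for x using f_nonneg Z_pos by (simp add: p_def)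
  show "\<forall>\<^sub>F x in at_top. 0 < p x"
    using eventually_ge_at_top[of 0] by eventually_elim (rule p_pos)
  show "asymp_eq (\<lambda>x. p (x + a)) p" for a
    unfolding asymp_eq_def using f_L[of a] Z_pos by (simp add: p_def)
  show "asymp_eq (conv p p) (\<lambda>x. 2 * p x)"
    unfolding asymp_eq_def
  proof -
    have "((\<lambda>x. (integral\<^sup>L lborel (g True x) + integral\<^sup>L lborel (g False x)) / 2) \<longlongrightarrow> (1 + 1) / 2) at_top"
      by (intro tendsto_intros g_conv) auto
    moreover have "\<forall>\<^sub>F x in at_top. (integral\<^sup>L lborel (g True x) + integral\<^sup>L lborel (g False x)) / 2
        = conv p p x / (2 * p x)"
      using eventually_gt_at_top[of 0] by eventually_elim (simp add: conv_p_ratio)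
    ultimately show "((\<lambda>x. conv p p x / (2 * p x)) \<longlongrightarrow> 1) at_top"
      by (auto intro: Lim_transform_eventually)
  qed
qed

definition q :: "real \<Rightarrow> real" where "q t = e0 (1 - t)"
definition p2 :: "real \<Rightarrow> real" where "p2 t = p t / 2 + q t / 2"

lemma q_meas[measurable]: "q \<in> borel_measurable borel" unfolding q_def by measurable

lemma q_int: "integrable lborel q" and q_integral: "integral\<^sup>L lborel q = 1"
proof -
  show "integrable lborel q"
    using lborel_integrable_real_affine[OF e0_int, of "-1" 1] by (simp add: q_def[abs_def])
  show "integral\<^sup>L lborel q = 1"
    using lborel_integral_real_affine[of "-1" e0 1] e0_integral by (simp add: q_def[abs_def])
qed

lemma p2_density: "density_fun p2"
  unfolding density_fun_def
proof (intro conjI allI)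
  show "p2 \<in> borel_measurable lborel" unfolding p2_def[abs_def] by simp
  show "0 \<le> p2 x" for x
    using f_nonneg Z_pos e0_nonneg by (simp add: p2_def p_def q_def)
  show "integrable lborel p2" unfolding p2_def[abs_def]
    using p_density q_int by (intro Bochner_Integration.integrable_add integrable_divide) (auto simp: density_fun_def)
  have "integral\<^sup>L lborel p2 = integral\<^sup>L lborel p / 2 + integral\<^sup>L lborel q / 2"
    unfolding p2_def[abs_def]
    using p_density q_int by (subst Bochner_Integration.integral_add) (auto simp: density_fun_def)
  then show "integral\<^sup>L lborel p2 = 1"
    using p_density q_integral by (simp add: density_fun_def)
qed

lemma q_zero: "x > 0 \<Longrightarrow> q x = 0"
  by (simp add: q_def e0_def)

lemma p2_asymp: "asymp_eq p2 (\<lambda>x. 1/2 * p x)"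
  unfolding asymp_eq_def
proof -
  have "\<forall>\<^sub>F x in at_top. 1 = p2 x / (1/2 * p x)"
    using eventually_gt_at_top[of 0]
  proof eventually_elim
    case (elim x)
    then show ?case using p_pos[of x] q_zero[of x] by (simp add: p2_def)
  qed
  then show "((\<lambda>x. p2 x / (1/2 * p x)) \<longlongrightarrow> 1) at_top"
    by (rule Lim_transform_eventually[OF tendsto_const])
qed

lemma cos_2pin: "cos (y + 2 * pi * real n) = cos y"
proof (induction n)
  case (Suc n)
  have eq: "y + 2 * pi * real (Suc n) = (y + 2 * pi * real n) + 2 * pi" by (simp add: algebra_simps)
  show ?case by (simp only: eq cos_periodic Suc.IH)
qed simp

lemma cos_le_half:
  assumes "2*pi/3 \<le> y" "y \<le> 4*pi/3"
  shows "cos y \<le> -1/2"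
proof -
  have "cos (y - pi) = cos \<bar>y - pi\<bar>" by (simp add: abs_if)
  also have "\<dots> \<ge> cos (pi / 3)"
  proof (rule cos_monotone_0_pi_le)
    have "y - pi \<le> pi / 3" "pi - y \<le> pi / 3" using assms by linarith+
    then show "\<bar>y - pi\<bar> \<le> pi / 3" by (intro abs_leI) linarith+
  qed (use pi_gt_zero in auto)
  finally have c: "cos (y - pi) \<ge> cos (pi / 3)" .
  have "cos (y - pi) = - cos y" by simp
  then show ?thesis using c cos_60 by linarith
qed

definition Lb :: "real \<Rightarrow> real" where
  "Lb N = ((2*pi*N + 4*pi/3)^2 - (2*pi*N + 2*pi/3)^2) / 4
     * (1 + ((2*pi*N + 4*pi/3)^2 - (2*pi*N)^2)) powr -2
     * (1 + (2*pi*N + 4*pi/3)^2) powr (-25/4) * (1 + (2*pi*N)^2) powr 7"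

lemma Lb_lim: "filterlim Lb at_top at_top"
  unfolding Lb_def by real_asymp

lemma f_lower_peak:
  fixes n :: nat
  assumes t1: "(2*pi*real n + 2*pi/3)^2 \<le> t" and t2: "t \<le> (2*pi*real n + 4*pi/3)^2"
  shows "f t \<ge> (1 + (2*pi*real n + 4*pi/3)^2) powr (-25/4)"
proof -
  define a where "a = 2*pi*real n + 2*pi/3"
  define b where "b = 2*pi*real n + 4*pi/3"
  have a0: "a \<ge> 0" "b \<ge> 0" using pi_gt_zero by (auto simp: a_def b_def)
  have t0: "t \<ge> 0" using t1 by (metis zero_le_power2 order_trans)
  have "sqrt (a^2) \<le> sqrt t" using t1 a_def by (intro real_sqrt_le_mono) simp
  then have sa: "a \<le> sqrt t" using a0 by simp
  have "sqrt t \<le> sqrt (b^2)" using t2 b_def by (intro real_sqrt_le_mono) simp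
  then have sb: "sqrt t \<le> b" using a0 by simp
  have "cos (sqrt t) = cos ((sqrt t - 2*pi*real n) + 2*pi*real n)" by simp
  also have "\<dots> = cos (sqrt t - 2*pi*real n)" by (rule cos_2pin)
  also have "\<dots> \<le> -1/2"
    using sa sb by (intro cos_le_half) (auto simp: a_def b_def)
  finally have "w t \<ge> 3/4" unfolding w_def by simp
  then have "3/4 * ln (1 + t) \<le> h t" unfolding h_def using t0 by (intro mult_right_mono) auto
  then have "exp (-25/4 * ln (1 + t)) \<le> f t" using t0 by (simp add: f_def)
  moreover have "exp (-25/4 * ln (1 + t)) = (1 + t) powr (-25/4)" using t0 by (simp add: powr_def)
  moreover have "(1 + b^2) powr (-25/4) \<le> (1 + t) powr (-25/4)"
    using t2 t0 b_def by (intro powr_mono2') auto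
  ultimately show ?thesis using b_def by simp
qed

lemma f_trough:
  fixes n :: nat
  shows "f ((2*pi*real n)^2) = (1 + (2*pi*real n)^2) powr -7"
proof -
  have "sqrt ((2*pi*real n)^2) = 2*pi*real n" using pi_gt_zero by simp
  moreover have "cos (0 + 2*pi*real n) = 1" by (simp only: cos_2pin) simp
  ultimately have "w ((2*pi*real n)^2) = 0" unfolding w_def by simp
  moreover have "0 < 1 + (2*pi*real n)^2" by (simp add: add_pos_nonneg)
  ultimately show ?thesis by (simp add: f_def h_def powr_def)
qed

lemma lower:
  fixes n :: nat
  assumes n: "n \<ge> 1" and nz: "conv p2 p2 ((2*pi*real n)^2) \<noteq> 0"
  shows "conv p2 p2 ((2*pi*real n)^2) / (2 * p2 ((2*pi*real n)^2)) \<ge> Lb (real n)"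
proof -
  define N where "N = real n"
  define x where "x = (2*pi*N)^2"
  define a where "a = 2*pi*N + 2*pi/3"
  define b where "b = 2*pi*N + 4*pi/3"
  define v1 where "v1 = a^2 - x"
  define v2 where "v2 = b^2 - x"
  define c where "c = (1 + b^2) powr (-25/4) / (2 * Z) * ((1 + v2) powr -2 / 2)"
  have N1: "N \<ge> 1" using n N_def by simp
  have x0: "x > 0" using N1 pi_gt_zero by (simp add: x_def)
  have ax: "x \<le> a^2" unfolding x_def a_def using N1 pi_gt_zero by (intro power_mono) auto
  have ab: "a^2 \<le> b^2" unfolding a_def b_def using N1 pi_gt_zero by (intro power_mono) auto
  have v1f: "0 \<le> v1" "v1 \<le> v2" using ax ab by (auto simp: v1_def v2_def)
  have c0: "c \<ge> 0" using Z_pos by (simp add: c_def)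
  define F where "F u = p2 (x - u) * p2 u" for u
  have p2nn: "0 \<le> p2 y" for y using p2_density by (simp add: density_fun_def)
  have Fint: "integrable lborel F"
    using nz not_integrable_integral_eq unfolding conv_def F_def x_def N_def by metis
  have Fb: "indicator {-v2..-v1} u * c \<le> F u" for u
  proof (cases "u \<in> {-v2..-v1}")
    case False then show ?thesis using p2nn by (simp add: F_def)
  next
    case True
    have u0: "u \<le> 0" using True v1f by simp
    have "q u = (1 - u) powr -2" using u0 by (simp add: q_def e0_def)
    also have "\<dots> \<ge> (1 + v2) powr -2" using True u0 by (intro powr_mono2') auto
    finally have qu: "q u \<ge> (1 + v2) powr -2" .
    have "0 \<le> f u / Z" using f_nonneg[of u] Z_pos by simp
    then have "0 / 2 + (1 + v2) powr -2 / 2 \<le> f u / Z / 2 + q u / 2"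
      using qu by (intro add_mono divide_right_mono) auto
    then have "p2 u \<ge> (1 + v2) powr -2 / 2"
      unfolding p2_def p_def by simp
    moreover have "p2 (x - u) \<ge> (1 + b^2) powr (-25/4) / (2 * Z)"
    proof -
      have "f (x - u) \<ge> (1 + b^2) powr (-25/4)" unfolding b_def N_def
        using True by (intro f_lower_peak) (auto simp: v1_def v2_def a_def b_def x_def N_def)
      moreover have "q (x - u) \<ge> 0" by (simp add: q_def e0_nonneg)
      ultimately have "(1 + b^2) powr (-25/4) / Z / 2 + 0 / 2 \<le> f (x - u) / Z / 2 + q (x - u) / 2"
        using Z_pos by (intro add_mono divide_right_mono) auto
      then show ?thesis unfolding p2_def p_def by simp
    qed
    ultimately have "(1 + b^2) powr (-25/4) / (2 * Z) * ((1 + v2) powr -2 / 2) \<le> p2 (x - u) * p2 u"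
      using Z_pos p2nn by (intro mult_mono) auto
    then show ?thesis using True by (simp add: F_def c_def)
  qed
  have "c * (v2 - v1) = (\<integral>u. indicator {-v2..-v1} u \<partial>lborel) * c"
    using v1f by simp
  also have "\<dots> = (\<integral>u. indicator {-v2..-v1} u * c \<partial>lborel)"
    by (rule integral_mult_left_zero[symmetric])
  also have "\<dots> \<le> integral\<^sup>L lborel F"
  proof (rule Bochner_Integration.integral_mono[OF _ Fint])
    show "integrable lborel (\<lambda>u. indicator {-v2..-v1} u * c)"
      by (intro integrable_mult_left integrable_real_indicator) (auto simp: emeasure_lborel_Icc_eq)
  qed (rule Fb)
  also have "\<dots> = conv p2 p2 x" unfolding conv_def F_def ..
  finally have cl: "c * (v2 - v1) \<le> conv p2 p2 x" .
  have fx: "f x = (1 + x) powr -7" unfolding x_def N_def by (rule f_trough)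
  have p2x: "2 * p2 x = f x / Z" using q_zero[OF x0] by (simp add: p2_def p_def)
  have fxp: "f x > 0" using x0 f_pos by simp
  have "conv p2 p2 x / (2 * p2 x) = conv p2 p2 x * Z / f x" using p2x Z_pos fxp by simp
  also have "\<dots> \<ge> c * (v2 - v1) * Z / f x"
    using cl Z_pos fxp by (intro divide_right_mono mult_right_mono) auto
  finally have "conv p2 p2 x / (2 * p2 x) \<ge> c * (v2 - v1) * Z / f x" .
  moreover have "c * (v2 - v1) * Z / f x = Lb N"
  proof -
    have "(1 + x) powr 7 > 0" using x0 by simp
    then have "c * (v2 - v1) * Z / f x = (v2 - v1) / 4 * (1 + v2) powr -2 * (1 + b^2) powr (-25/4) * (1 + x) powr 7"
      unfolding fx c_def using Z_pos by (simp add: powr_minus field_simps) (simp add: right_diff_distrib[symmetric])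
    also have "\<dots> = Lb N" unfolding Lb_def v1_def v2_def a_def b_def x_def by simp
    finally show ?thesis .
  qed
  ultimately show ?thesis by (simp add: x_def N_def)
qed

lemma p2_not_S: "p2 \<notin> S_d"
proof
  assume "p2 \<in> S_d"
  then have lim: "((\<lambda>x. conv p2 p2 x / (2 * p2 x)) \<longlongrightarrow> 1) at_top"
    by (simp add: S_d_def asymp_eq_def)
  have "\<forall>\<^sub>F x in at_top. 1/2 < conv p2 p2 x / (2 * p2 x)"
    by (rule order_tendstoD(1)[OF lim]) simp
  moreover have "\<forall>\<^sub>F x in at_top. conv p2 p2 x / (2 * p2 x) < 3/2"
    by (rule order_tendstoD(2)[OF lim]) simp
  ultimately have "\<forall>\<^sub>F x in at_top. 1/2 < conv p2 p2 x / (2 * p2 x) \<and> conv p2 p2 x / (2 * p2 x) < 3/2"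
    by eventually_elim auto
  then obtain X where X: "\<And>x. x \<ge> X \<Longrightarrow> 1/2 < conv p2 p2 x / (2 * p2 x) \<and> conv p2 p2 x / (2 * p2 x) < 3/2"
    by (auto simp: eventually_at_top_linorder)
  have "\<forall>\<^sub>F N in at_top. 2 \<le> Lb N"
    using Lb_lim by (simp add: filterlim_at_top)
  then obtain N0 where N0: "\<And>N. N \<ge> N0 \<Longrightarrow> 2 \<le> Lb N"
    by (auto simp: eventually_at_top_linorder)
  define n where "n = nat \<lceil>max (max N0 X) 1\<rceil>"
  have nge: "real n \<ge> max (max N0 X) 1" unfolding n_def by (rule real_nat_ceiling_ge)
  then have n1: "n \<ge> 1" "real n \<ge> N0" "real n \<ge> X" by auto
  define x where "x = (2*pi*real n)^2"
  have "2*pi*real n \<ge> 1 * real n" using pi_gt_zero n1 pi_ge_two by (intro mult_right_mono) auto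
  moreover have "(2*pi*real n)^2 \<ge> 2*pi*real n"
  proof -
    have "1 * 1 \<le> (2*pi) * real n" using pi_ge_two n1 by (intro mult_mono) auto
    then have g1: "2*pi*real n \<ge> 1" by simp
    then have "(2*pi*real n) * 1 \<le> (2*pi*real n) * (2*pi*real n)"
      by (intro mult_left_mono) auto
    then show ?thesis by (simp add: power2_eq_square)
  qed
  ultimately have "real n \<le> (2*pi*real n)^2" by simp
  then have "x \<ge> X" using n1 x_def by simp
  then have Rx: "1/2 < conv p2 p2 x / (2 * p2 x)" "conv p2 p2 x / (2 * p2 x) < 3/2" using X by auto
  then have "conv p2 p2 x \<noteq> 0" by auto
  then have "conv p2 p2 x / (2 * p2 x) \<ge> Lb (real n)"
    using lower[OF n1(1)] x_def by simp
  moreover have "Lb (real n) \<ge> 2" using N0 n1 by simp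
  ultimately show False using Rx by simp
qed

theorem theorem1p2:
  shows "\<exists>p1 p2 (c::real). density_fun p1 \<and> density_fun p2 \<and> c > 0 \<and>
           p1 \<in> S_d \<and> p2 \<notin> S_d \<and> asymp_eq p2 (\<lambda>x. c * p1 x)"
  using p_density p2_density p_S p2_not_S p2_asymp by (intro exI[of _ p] exI[of _ p2] exI[of _ "1/2"]) auto

end
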